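(* Let $x,y$ be non-commuting indeterminates and $C=xyx^{-1}y^{-1}$. Let $(R_n)_{n\in\mathbb Z}$ be the solution of $$R_{n+1}CR_{n-1}=R_n^2+1\qquad(n\in\mathbb Z)$$ with $R_0=yxy^{-1}$ and $R_1=y$. Then for all $n\ge 0$, $R_n$ is a Laurent polynomial in $x,y$ with only non-negative integer coefficients.
   Context: Work in the free skew field (non-commutative rational functions) over $\mathbb C$ generated by $x,y$. A Laurent polynomial in $x,y$ is a $\mathbb Z$-linear combination of words in $x^{\pm1},y^{\pm1}$. *)

theory Defs
  imports Main
begin

text \<open>The free group on two generators x, y, realised by reduced words.
  A letter is a pair (g, e): g = False means generator x, g = True means y;
  e = False means the generator itself, e = True its inverse.\<close>

type_synonym letter = "bool \<times> bool"

definition inv_letter :: "letter \<Rightarrow> letter" where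
  "inv_letter a = (fst a, \<not> snd a)"

definition X :: letter where "X = (False, False)"
definition Xinv :: letter where "Xinv = (False, True)"
definition Y :: letter where "Y = (True, False)"
definition Yinv :: letter where "Yinv = (True, True)"

definition reduced :: "letter list \<Rightarrow> bool" where
  "reduced w \<longleftrightarrow> (\<forall>i. Suc i < length w \<longrightarrow> w ! Suc i \<noteq> inv_letter (w ! i))"

text \<open>Free reduction of a word (the group multiplication in the free group is
  \<open>red (u @ v)\<close>).\<close>
fun red :: "letter list \<Rightarrow> letter list" where
  "red [] = []"
| "red (a # w) = (case red w of [] \<Rightarrow> [a]
                   | b # v \<Rightarrow> (if b = inv_letter a then v else a # b # v))"

text \<open>Laurent polynomials in x, y with integer coefficients = the integral group
  ring of the free group: finitely supported integer-valued functions on reduced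
  words.\<close>
type_synonym laurent = "letter list \<Rightarrow> int"

definition is_laurent :: "laurent \<Rightarrow> bool" where
  "is_laurent f \<longleftrightarrow> finite {w. f w \<noteq> 0} \<and> (\<forall>w. f w \<noteq> 0 \<longrightarrow> reduced w)"

definition lmono :: "letter list \<Rightarrow> laurent" where
  "lmono w = (\<lambda>u. if u = red w then 1 else 0)"

definition lone :: laurent where
  "lone = lmono []"

definition ladd :: "laurent \<Rightarrow> laurent \<Rightarrow> laurent" where
  "ladd f g = (\<lambda>w. f w + g w)"

definition lmul :: "laurent \<Rightarrow> laurent \<Rightarrow> laurent" where
  "lmul f g = (\<lambda>w. \<Sum>(u, v) \<in> {(u, v). f u \<noteq> 0 \<and> g v \<noteq> 0 \<and> red (u @ v) = w}. f u * g v)"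

definition Ccomm :: laurent where
  "Ccomm = lmono [X, Y, Xinv, Yinv]"

end

theory Submission
  imports Defs "HOL-Library.Poly_Mapping"
begin


lemma inv_inv[simp]: "inv_letter (inv_letter a) = a"
  by (simp add: inv_letter_def)

lemma reduced_Cons: "reduced (a#w) \<longleftrightarrow> (case w of [] \<Rightarrow> True | b#_ \<Rightarrow> b \<noteq> inv_letter a) \<and> reduced w"
  unfolding reduced_def
  apply (cases w)
   apply simp
  apply (auto simp: nth_Cons split: nat.split)
  done

lemma reduced_Nil[simp]: "reduced []" by (simp add: reduced_def)
lemma reduced_one[simp]: "reduced [a]" by (simp add: reduced_def)
lemma reduced_Cons2[simp]: "reduced (a#b#v) \<longleftrightarrow> b \<noteq> inv_letter a \<and> reduced (b#v)"
  by (subst reduced_Cons) simp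

lemma reduced_tl: "reduced (a#w) \<Longrightarrow> reduced w"
  by (simp add: reduced_Cons)

definition step :: "letter \<Rightarrow> letter list \<Rightarrow> letter list" where
  "step a r = (case r of [] \<Rightarrow> [a] | b # v \<Rightarrow> (if b = inv_letter a then v else a # b # v))"

lemma step_Cons_inv[simp]: "step a (inv_letter a # r) = r"
  by (simp add: step_def)

lemma red_Cons_step: "red (a # w) = step a (red w)"
  by (simp add: step_def)

declare red.simps(2)[simp del]

lemma red_reduced: "reduced (red w)"
proof (induction w)
  case Nil then show ?case by simp
next
  case (Cons a w)
  then show ?case
    by (auto simp: red.simps(2) split: list.split dest: reduced_tl)
qed

lemma red_id: "reduced w \<Longrightarrow> red w = w"
proof (induction w)
  case Nil then show ?case by simp
next
  case (Cons a w)
  then show ?case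
    by (cases w) (auto simp: red.simps(2) dest: reduced_tl)
qed

lemma step_inv: "reduced s \<Longrightarrow> step a (step (inv_letter a) s) = s"
  by (cases s) (auto simp: step_def split: list.split)

lemma red_red_right: "red (u @ red v) = red (u @ v)"
  by (induction u) (simp_all add: red_id red_reduced red_Cons_step)

lemma red_step_key: "reduced r \<Longrightarrow> red (step a r @ v) = step a (red (r @ v))"
proof (cases r)
  case Nil then show ?thesis by (simp add: step_def red.simps(2))
next
  case (Cons b r')
  assume rr: "reduced r"
  show ?thesis
  proof (cases "b = inv_letter a")
    case True
    have "reduced (red (r' @ v))" by (rule red_reduced)
    then show ?thesis using Cons True
      by (simp add: red_Cons_step step_inv)
  next
    case False
    then show ?thesis using Cons by (simp add: step_def red_Cons_step)
  qed
qed

lemma red_red_left: "red (red u @ v) = red (u @ v)"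
proof (induction u)
  case Nil then show ?case by simp
next
  case (Cons a u)
  have "red (red (a # u) @ v) = red (step a (red u) @ v)" by (simp add: red_Cons_step)
  also have "\<dots> = step a (red (red u @ v))" by (rule red_step_key[OF red_reduced])
  also have "\<dots> = red ((a # u) @ v)" using Cons by (simp add: red_Cons_step)
  finally show ?case .
qed

typedef fg = "{w::letter list. reduced w}" morphisms wrd abs_fg
  by (rule exI[of _ "[]"]) simp

instantiation fg :: monoid_add
begin
definition zero_fg :: fg where "zero_fg = abs_fg []"
definition plus_fg :: "fg \<Rightarrow> fg \<Rightarrow> fg" where "plus_fg a b = abs_fg (red (wrd a @ wrd b))"
instance
proof
  fix a b c :: fg
  have w: "\<And>a. reduced (wrd a)" using wrd by auto
  have r: "\<And>w. wrd (abs_fg (red w)) = red w" by (simp add: abs_fg_inverse red_reduced)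
  show "a + b + c = a + (b + c)"
    by (simp add: plus_fg_def r red_red_left red_red_right)
  show "0 + a = a"
    by (simp add: plus_fg_def zero_fg_def abs_fg_inverse red_id w wrd_inverse)
  show "a + 0 = a"
    by (simp add: plus_fg_def zero_fg_def abs_fg_inverse red_id w wrd_inverse)
qed
end


lemma wrd_red[simp]: "reduced (wrd a)" using wrd by auto

lemma plus_abs: "reduced u \<Longrightarrow> reduced v \<Longrightarrow> abs_fg u + abs_fg v = abs_fg (red (u @ v))"
  by (simp add: plus_fg_def abs_fg_inverse)

type_synonym G = "fg \<Rightarrow>\<^sub>0 int"

definition Phi :: "G \<Rightarrow> laurent" where
  "Phi p = (\<lambda>w. if reduced w then Poly_Mapping.lookup p (abs_fg w) else 0)"

definition gmono :: "letter list \<Rightarrow> G" where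
  "gmono w = Poly_Mapping.single (abs_fg (red w)) 1"

lemma Phi_add: "Phi (p + q) = ladd (Phi p) (Phi q)"
  by (auto simp: Phi_def ladd_def lookup_add)

lemma Phi_gmono: "Phi (gmono w) = lmono w"
proof (rule ext)
  fix u
  show "Phi (gmono w) u = lmono w u"
    using red_reduced[of w]
    by (auto simp: Phi_def gmono_def lmono_def lookup_single when_def abs_fg_inject)
qed

lemma gmono_Nil: "gmono [] = 1"
  by (simp add: gmono_def zero_fg_def[symmetric])

lemma Phi_one: "Phi 1 = lone"
  by (simp add: lone_def Phi_gmono gmono_Nil[symmetric])

lemma Phi_laurent: "is_laurent (Phi p)"
proof -
  have "{w. Phi p w \<noteq> 0} \<subseteq> wrd ` {a. Poly_Mapping.lookup p a \<noteq> 0}"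
  proof
    fix w assume "w \<in> {w. Phi p w \<noteq> 0}"
    then have "reduced w" "Poly_Mapping.lookup p (abs_fg w) \<noteq> 0" by (auto simp: Phi_def split: if_splits)
    then show "w \<in> wrd ` {a. Poly_Mapping.lookup p a \<noteq> 0}"
      by (intro image_eqI[of _ _ "abs_fg w"]) (auto simp: abs_fg_inverse)
  qed
  then have "finite {w. Phi p w \<noteq> 0}" by (rule finite_subset) simp
  then show ?thesis by (auto simp: is_laurent_def Phi_def split: if_splits)
qed

lemma lookup_mult_sum:
  fixes p q :: G
  shows
  "Poly_Mapping.lookup (p * q) k = (\<Sum>(a,b)\<in>{(a,b). Poly_Mapping.lookup p a \<noteq> 0 \<and> Poly_Mapping.lookup q b \<noteq> 0 \<and> a + b = k}. Poly_Mapping.lookup p a * Poly_Mapping.lookup q b)"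
proof -
  have "Poly_Mapping.lookup (p * q) k = prod_fun (Poly_Mapping.lookup p) (Poly_Mapping.lookup q) k"
    by (simp add: times_poly_mapping.rep_eq)
  also have "\<dots> = (\<Sum>(a, b). Poly_Mapping.lookup p a * Poly_Mapping.lookup q b when k = a + b)"
    by (rule prod_fun_unfold_prod) simp_all
  also have "\<dots> = sum (\<lambda>(a, b). Poly_Mapping.lookup p a * Poly_Mapping.lookup q b when k = a + b)
       {x. (\<lambda>(a, b). Poly_Mapping.lookup p a * Poly_Mapping.lookup q b when k = a + b) x \<noteq> 0}"
    by (rule Sum_any.expand_set)
  also have "{x. (\<lambda>(a, b). Poly_Mapping.lookup p a * Poly_Mapping.lookup q b when k = a + b) x \<noteq> 0}
      = {(a,b). Poly_Mapping.lookup p a \<noteq> 0 \<and> Poly_Mapping.lookup q b \<noteq> 0 \<and> a + b = k}"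
    by (auto simp: when_def split: if_splits)
  also have "sum (\<lambda>(a, b). Poly_Mapping.lookup p a * Poly_Mapping.lookup q b when k = a + b) {(a,b). Poly_Mapping.lookup p a \<noteq> 0 \<and> Poly_Mapping.lookup q b \<noteq> 0 \<and> a + b = k}
     = (\<Sum>(a,b)\<in>{(a,b). Poly_Mapping.lookup p a \<noteq> 0 \<and> Poly_Mapping.lookup q b \<noteq> 0 \<and> a + b = k}. Poly_Mapping.lookup p a * Poly_Mapping.lookup q b)"
    by (rule sum.cong) (auto simp: when_def)
  finally show ?thesis .
qed

lemma Phi_mult: "Phi (p * q) = lmul (Phi p) (Phi q)"
proof (rule ext)
  fix w
  show "Phi (p*q) w = lmul (Phi p) (Phi q) w"
  proof (cases "reduced w")
    case False
    then have E: "{(u,v). Phi p u \<noteq> 0 \<and> Phi q v \<noteq> 0 \<and> red (u@v) = w} = {}"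
      using red_reduced by auto
    have "lmul (Phi p) (Phi q) w = 0" unfolding lmul_def by (simp only: E) simp
    then show ?thesis using False by (simp add: Phi_def)
  next
    case True
    have "Phi (p*q) w = Poly_Mapping.lookup (p*q) (abs_fg w)" using True by (simp add: Phi_def)
    also have "\<dots> = (\<Sum>(a,b)\<in>{(a,b). Poly_Mapping.lookup p a \<noteq> 0 \<and> Poly_Mapping.lookup q b \<noteq> 0 \<and> a + b = abs_fg w}. Poly_Mapping.lookup p a * Poly_Mapping.lookup q b)"
      by (rule lookup_mult_sum)
    also have "\<dots> = lmul (Phi p) (Phi q) w"
      unfolding lmul_def
    proof (rule sum.reindex_bij_witness[where i="\<lambda>(u,v). (abs_fg u, abs_fg v)" and j = "\<lambda>(a,b). (wrd a, wrd b)"])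
      fix a assume "a \<in> {(a,b). Poly_Mapping.lookup p a \<noteq> 0 \<and> Poly_Mapping.lookup q b \<noteq> 0 \<and> a + b = abs_fg w}"
      then show "(\<lambda>(u,v). (abs_fg u, abs_fg v)) ((\<lambda>(a,b). (wrd a, wrd b)) a) = a"
        by (auto simp: wrd_inverse)
    next
      fix a assume "a \<in> {(a,b). Poly_Mapping.lookup p a \<noteq> 0 \<and> Poly_Mapping.lookup q b \<noteq> 0 \<and> a + b = abs_fg w}"
      then show "(\<lambda>(a,b). (wrd a, wrd b)) a \<in> {(u,v). Phi p u \<noteq> 0 \<and> Phi q v \<noteq> 0 \<and> red (u@v) = w}"
        using True by (auto simp: Phi_def wrd_inverse plus_fg_def abs_fg_inject red_reduced)
    next
      fix b assume "b \<in> {(u,v). Phi p u \<noteq> 0 \<and> Phi q v \<noteq> 0 \<and> red (u@v) = w}"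
      then show "(\<lambda>(a,b). (wrd a, wrd b)) ((\<lambda>(u,v). (abs_fg u, abs_fg v)) b) = b"
        by (auto simp: Phi_def abs_fg_inverse split: if_splits)
    next
      fix b assume "b \<in> {(u,v). Phi p u \<noteq> 0 \<and> Phi q v \<noteq> 0 \<and> red (u@v) = w}"
      then show "(\<lambda>(u,v). (abs_fg u, abs_fg v)) b \<in> {(a,b). Poly_Mapping.lookup p a \<noteq> 0 \<and> Poly_Mapping.lookup q b \<noteq> 0 \<and> a + b = abs_fg w}"
        by (auto simp: Phi_def plus_abs split: if_splits)
    next
      fix a assume "a \<in> {(a,b). Poly_Mapping.lookup p a \<noteq> 0 \<and> Poly_Mapping.lookup q b \<noteq> 0 \<and> a + b = abs_fg w}"
      then show "(\<lambda>(u,v). Phi p u * Phi q v) ((\<lambda>(a,b). (wrd a, wrd b)) a) = (\<lambda>(a,b). Poly_Mapping.lookup p a * Poly_Mapping.lookup q b) a"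
        by (auto simp: Phi_def wrd_inverse)
    qed
    finally show ?thesis .
  qed
qed

lemma gmono_mult: "gmono u * gmono v = gmono (red (u @ v))"
  by (simp add: gmono_def mult_single plus_abs red_reduced red_red_left red_red_right red_id)

lemma lmul_nonneg: "(\<forall>w. f w \<ge> 0) \<Longrightarrow> (\<forall>w. g w \<ge> 0) \<Longrightarrow> lmul f g w \<ge> 0"
  unfolding lmul_def by (rule sum_nonneg) auto



lemmas W = X_def Xinv_def Y_def Yinv_def inv_letter_def red.simps step_def

definition P :: G where "P = gmono [Yinv,Xinv] + gmono [X,X,Yinv,Xinv] + gmono [Y,Xinv]"
definition Q :: G where "Q = gmono [Y,X,Yinv,Xinv]"
definition LX :: G where "LX = gmono [Xinv] + gmono [X] + gmono [Y,Y,Xinv]"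
definition cc :: G where "cc = gmono [X,Y,Xinv]"

lemma Pc: "P * cc = LX"
  by (simp add: P_def cc_def LX_def algebra_simps gmono_mult W)

lemma Qc: "Q * cc = gmono [Y]"
  by (simp add: Q_def cc_def gmono_mult W)

fun PAB :: "nat \<Rightarrow> G \<times> G" where
  "PAB 0 = (1, 0)"
| "PAB (Suc k) = (let (a, b) = PAB k in ((a + b) * gmono [Yinv,Xinv] + a * gmono [Y,Xinv], (a + b) * gmono [Yinv,X]))"

definition PA where "PA k = fst (PAB k)"
definition PB where "PB k = snd (PAB k)"

lemma PA_Suc: "PA (Suc k) = (PA k + PB k) * gmono [Yinv,Xinv] + PA k * gmono [Y,Xinv]"
  by (simp add: PA_def PB_def case_prod_beta Let_def)
lemma PB_Suc: "PB (Suc k) = (PA k + PB k) * gmono [Yinv,X]"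
  by (simp add: PA_def PB_def case_prod_beta Let_def)
lemma PA0: "PA 0 = 1" by (simp add: PA_def)
lemma PB0: "PB 0 = 0" by (simp add: PB_def)

lemma PA_rec: "PA (Suc (Suc k)) = PA (Suc k) * P - PA k * Q"
proof -
  let ?S = "PA k + PB k"
  have e1: "?S * gmono [Yinv,Xinv] = PA (Suc k) - PA k * gmono [Y,Xinv]" by (simp add: PA_Suc)
  have m1: "gmono [Yinv,Xinv] * gmono [X,X,Yinv,Xinv] = gmono [Yinv,X,Yinv,Xinv]" by (simp add: gmono_mult W)
  have m2: "gmono [Y,Xinv] * gmono [X,X,Yinv,Xinv] = gmono [Y,X,Yinv,Xinv]" by (simp add: gmono_mult W)
  have h0: "PA (Suc (Suc k)) = PA (Suc k) * gmono [Yinv,Xinv] + ?S * gmono [Yinv,X] * gmono [Yinv,Xinv] + PA (Suc k) * gmono [Y,Xinv]"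
    by (simp add: PA_Suc[of "Suc k"] PB_Suc algebra_simps)
  have h1: "?S * gmono [Yinv,X] * gmono [Yinv,Xinv] = ?S * gmono [Yinv,Xinv] * gmono [X,X,Yinv,Xinv]"
    by (simp add: mult.assoc gmono_mult W)
  have h2: "?S * gmono [Yinv,Xinv] * gmono [X,X,Yinv,Xinv] = PA (Suc k) * gmono [X,X,Yinv,Xinv] - PA k * Q"
    by (simp only: e1) (simp add: algebra_simps m2 Q_def)
  show ?thesis unfolding h0 h1 h2 by (simp add: P_def algebra_simps)
qed


lemma PA1: "PA (Suc 0) = gmono [Yinv,Xinv] + gmono [Y,Xinv]"
  by (simp add: PA_Suc PA0 PB0)

lemma LR_base0: "gmono [Y] * PA (Suc (Suc 0)) = LX * PA (Suc 0) - cc * PA 0"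
  by (simp add: PA_rec PA1 PA0 P_def Q_def LX_def cc_def algebra_simps gmono_mult W)

lemma LR_base1: "gmono [Y] * PA (Suc (Suc (Suc 0))) = LX * PA (Suc (Suc 0)) - cc * PA (Suc 0)"
  by (simp add: PA_rec PA1 PA0 P_def Q_def LX_def cc_def algebra_simps gmono_mult W)

lemma E_base: "PA (Suc (Suc 0)) * cc * PA 0 - PA (Suc 0) * gmono [Y] * PA (Suc 0) = gmono [Yinv]"
  by (simp add: PA_rec PA1 PA0 P_def Q_def LX_def cc_def algebra_simps gmono_mult W)

lemma Cy: "gmono [X,Y,Xinv,Yinv] * gmono [Y] = cc"
  by (simp add: cc_def gmono_mult W)

lemma n1: "gmono [Y] * PA (Suc 0) * gmono [X,Y,Xinv,Yinv] * gmono [Y,X,Yinv] = gmono [Y] * gmono [Y] + 1"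
  by (simp add: PA1 algebra_simps gmono_mult W gmono_Nil)


lemma LR2: "gmono [Y] * PA (Suc (Suc j)) = LX * PA (Suc j) - cc * PA j \<and>
            gmono [Y] * PA (Suc (Suc (Suc j))) = LX * PA (Suc (Suc j)) - cc * PA (Suc j)"
proof (induction j)
  case 0 then show ?case using LR_base0 LR_base1 by simp
next
  case (Suc j)
  then have h1: "gmono [Y] * PA (Suc (Suc j)) = LX * PA (Suc j) - cc * PA j"
        and h2: "gmono [Y] * PA (Suc (Suc (Suc j))) = LX * PA (Suc (Suc j)) - cc * PA (Suc j)" by auto
  have a: "gmono [Y] * PA (Suc (Suc (Suc (Suc j)))) = (gmono [Y] * PA (Suc (Suc (Suc j)))) * P - (gmono [Y] * PA (Suc (Suc j))) * Q"
    by (simp only: PA_rec[of "Suc (Suc j)"]) (simp add: algebra_simps)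
  have b: "LX * PA (Suc (Suc (Suc j))) - cc * PA (Suc (Suc j)) =
      LX * (PA (Suc (Suc j)) * P - PA (Suc j) * Q) - cc * (PA (Suc j) * P - PA j * Q)"
    by (simp only: PA_rec)
  have "gmono [Y] * PA (Suc (Suc (Suc (Suc j)))) = LX * PA (Suc (Suc (Suc j))) - cc * PA (Suc (Suc j))"
    unfolding a b h1 h2 by (simp add: algebra_simps)
  then show ?case using h2 by simp
qed

lemma LR: "gmono [Y] * PA (Suc (Suc j)) = LX * PA (Suc j) - cc * PA j"
  using LR2 by blast

lemma Einv: "PA (Suc (Suc j)) * cc * PA j - PA (Suc j) * gmono [Y] * PA (Suc j) = gmono [Yinv]"
proof (induction j)
  case 0 then show ?case using E_base by simp
next
  case (Suc j)
  have a: "PA (Suc (Suc (Suc j))) * cc = PA (Suc (Suc j)) * LX - PA (Suc j) * gmono [Y]"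
    by (simp only: PA_rec[of "Suc j"] left_diff_distrib mult.assoc Pc Qc)
  have "PA (Suc (Suc (Suc j))) * cc * PA (Suc j) - PA (Suc (Suc j)) * gmono [Y] * PA (Suc (Suc j))
      = (PA (Suc (Suc j)) * LX - PA (Suc j) * gmono [Y]) * PA (Suc j) - PA (Suc (Suc j)) * (gmono [Y] * PA (Suc (Suc j)))"
    by (simp only: a mult.assoc)
  also have "\<dots> = (PA (Suc (Suc j)) * LX - PA (Suc j) * gmono [Y]) * PA (Suc j) - PA (Suc (Suc j)) * (LX * PA (Suc j) - cc * PA j)"
    by (simp only: LR)
  also have "\<dots> = PA (Suc (Suc j)) * cc * PA j - PA (Suc j) * gmono [Y] * PA (Suc j)"
    by (simp add: algebra_simps)
  finally show ?case using Suc by simp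
qed


lemma PAB_nonneg: "(\<forall>w. Phi (PA k) w \<ge> 0) \<and> (\<forall>w. Phi (PB k) w \<ge> 0)"
proof (induction k)
  case 0 then show ?case by (simp add: PA0 PB0 Phi_def lookup_one when_def)
next
  case (Suc k)
  have m: "\<And>u w. Phi (gmono u) w \<ge> 0" by (simp add: Phi_gmono lmono_def)
  have s: "\<forall>w. Phi (PA k + PB k) w \<ge> 0" using Suc by (simp add: Phi_add ladd_def)
  have "\<forall>w. Phi (PA (Suc k)) w \<ge> 0"
    unfolding PA_Suc Phi_add Phi_mult ladd_def
    using s Suc m by (auto intro!: add_nonneg_nonneg lmul_nonneg)
  moreover have "\<forall>w. Phi (PB (Suc k)) w \<ge> 0"
    unfolding PB_Suc Phi_mult
    using s m by (auto intro!: lmul_nonneg)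
  ultimately show ?case by blast
qed

lemma gmono_YYinv: "gmono [Y] * gmono [Yinv] = 1"
  by (simp add: gmono_mult W gmono_Nil)

lemma main_step: "gmono [Y] * PA (Suc (Suc m)) * gmono [X,Y,Xinv,Yinv] * (gmono [Y] * PA m)
     = gmono [Y] * PA (Suc m) * (gmono [Y] * PA (Suc m)) + 1"
proof -
  have "gmono [Y] * PA (Suc (Suc m)) * gmono [X,Y,Xinv,Yinv] * (gmono [Y] * PA m)
      = gmono [Y] * (PA (Suc (Suc m)) * (gmono [X,Y,Xinv,Yinv] * gmono [Y]) * PA m)"
    by (simp add: mult.assoc)
  also have "\<dots> = gmono [Y] * (PA (Suc (Suc m)) * cc * PA m)" by (simp only: Cy)
  also have "PA (Suc (Suc m)) * cc * PA m = gmono [Yinv] + PA (Suc m) * gmono [Y] * PA (Suc m)"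
    using Einv[of m] by (simp add: algebra_simps)
  finally show ?thesis by (simp add: algebra_simps gmono_YYinv flip: mult.assoc)
qed

theorem corollary3p4:
  shows "\<exists>R :: nat \<Rightarrow> laurent.
           R 0 = lmono [Y, X, Yinv] \<and> R 1 = lmono [Y] \<and>
           (\<forall>n\<ge>1. lmul (lmul (R (n + 1)) Ccomm) (R (n - 1)) = ladd (lmul (R n) (R n)) lone) \<and>
           (\<forall>n. is_laurent (R n) \<and> (\<forall>w. R n w \<ge> 0))"
proof -
  define R :: "nat \<Rightarrow> laurent" where
    "R n = (if n = 0 then lmono [Y, X, Yinv] else Phi (gmono [Y] * PA (n - 1)))" for n
  have R0: "R 0 = Phi (gmono [Y, X, Yinv])" by (simp add: R_def Phi_gmono)
  have RS: "R (Suc m) = Phi (gmono [Y] * PA m)" for m by (simp add: R_def)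
  have C: "Ccomm = Phi (gmono [X,Y,Xinv,Yinv])" by (simp add: Ccomm_def Phi_gmono)
  have "R 1 = lmono [Y]" using RS[of 0] by (simp add: PA0 Phi_gmono)
  moreover have "lmul (lmul (R (n + 1)) Ccomm) (R (n - 1)) = ladd (lmul (R n) (R n)) lone" if "n \<ge> 1" for n
  proof (cases "n = 1")
    case True
    then show ?thesis
      using n1 by (simp add: PA0 R0 RS[of 0, simplified] RS[of 1, simplified] C flip: Phi_mult Phi_add Phi_one)
  next
    case False
    define m where "m = n - 2"
    have n: "n = Suc (Suc m)" using that False by (simp add: m_def)
    show ?thesis
      using main_step[of m] by (simp add: n RS C flip: Phi_mult Phi_add Phi_one)
  qed
  moreover have "is_laurent (R n) \<and> (\<forall>w. R n w \<ge> 0)" for n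
  proof (cases n)
    case 0 then show ?thesis by (simp add: R0 Phi_laurent) (simp add: Phi_gmono lmono_def)
  next
    case (Suc m)
    have "\<forall>w. Phi (gmono [Y] * PA m) w \<ge> 0"
      unfolding Phi_mult using PAB_nonneg[of m]
      by (auto intro!: lmul_nonneg simp: Phi_gmono lmono_def)
    then show ?thesis by (simp add: Suc RS Phi_laurent)
  qed
  ultimately show ?thesis by (intro exI[of _ R]) (auto simp: R_def)
qed

end
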